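(* Let $Q\in\mathbb{C}^{2d\times2d}$ be symmetric and $F=\mathcal{J}Q$. Then for every $t>0$, $$S=\Big(\bigcap_{0\le s\le t}\operatorname{Ker}\big({\rm Im}\,e^{2isF}\big)\Big)\cap T^*\mathbb{R}^d=\Big(\bigcap_{k=1}^{\infty}\operatorname{Ker}\big[{\rm Im}\,((iF)^k)\big]\Big)\cap T^*\mathbb{R}^d,$$ and for every $X\in S$ and $t\in\mathbb{R}$ one has $e^{2itF}X=e^{-2t\,{\rm Im}\,F}X$; moreover $e^{2t\,{\rm Im}\,F}S=S$.
   Context: $\mathcal{J}=\begin{pmatrix}0&I_d\\-I_d&0\end{pmatrix}$; ${\rm Re}$, ${\rm Im}$ of matrices are entrywise. Singular space: $S=\Big(\bigcap_{j=0}^{2d-1}\operatorname{Ker}\big[{\rm Re}\,F({\rm Im}\,F)^j\big]\Big)\cap T^*\mathbb{R}^d$, where kernels are in $\mathbb{C}^{2d}$ and $T^*\mathbb{R}^d=\mathbb{R}^{2d}\subseteq\mathbb{C}^{2d}$. *)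

theory Defs
  imports "HOL-Analysis.Analysis"
begin

text \<open>Complex 2d x 2d matrices, indexed by the finite type 'd + 'd
  (first block = position coordinates, second block = momentum coordinates).\<close>

type_synonym 'd cmat = "complex ^ ('d + 'd) ^ ('d + 'd)"
type_synonym 'd cvec = "complex ^ ('d + 'd)"

definition Jmat :: "'d::finite cmat" where
  "Jmat = (\<chi> i j. (case (i, j) of
      (Inl a, Inr b) \<Rightarrow> (if a = b then 1 else 0)
    | (Inr a, Inl b) \<Rightarrow> (if a = b then -1 else 0)
    | _ \<Rightarrow> 0))"

primrec mpow :: "'a::comm_ring_1 ^ 'n ^ 'n \<Rightarrow> nat \<Rightarrow> 'a ^ 'n ^ 'n" where
  "mpow A 0 = mat 1"
| "mpow A (Suc k) = A ** mpow A k"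

definition mscale :: "'a::times \<Rightarrow> 'a ^ 'n ^ 'm \<Rightarrow> 'a ^ 'n ^ 'm" where
  "mscale c A = (\<chi> i j. c * A $ i $ j)"

definition mexp :: "complex ^ 'n ^ 'n \<Rightarrow> complex ^ 'n ^ 'n" where
  "mexp A = (\<Sum>k. mscale (1 / fact k :: complex) (mpow A k))"

definition ReM :: "complex ^ 'n ^ 'm \<Rightarrow> complex ^ 'n ^ 'm" where
  "ReM A = (\<chi> i j. complex_of_real (Re (A $ i $ j)))"
definition ImM :: "complex ^ 'n ^ 'm \<Rightarrow> complex ^ 'n ^ 'm" where
  "ImM A = (\<chi> i j. complex_of_real (Im (A $ i $ j)))"

definition KerM :: "complex ^ 'n ^ 'm \<Rightarrow> (complex ^ 'n) set" where
  "KerM A = {x. A *v x = 0}"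

text \<open>Real phase space T^*R^d = R^{2d} inside C^{2d}.\<close>
definition realphase :: "(complex ^ 'n) set" where
  "realphase = {x. \<forall>i. Im (x $ i) = 0}"

definition singular_space :: "'d::finite cmat \<Rightarrow> 'd cvec set" where
  "singular_space F =
     (\<Inter>j\<in>{0..<2 * CARD('d)}. KerM (ReM F ** mpow (ImM F) j)) \<inter> realphase"

end

theory Submission
  imports Defs
begin

lemma mscale_real: "mscale (complex_of_real r) P = r *\<^sub>R P"
  unfolding mscale_def vec_eq_iff by (simp add: scaleR_conv_of_real[where 'a=complex])

lemma mscale_fact: "mscale (1 / fact k :: complex) P = (1 / fact k) *\<^sub>R P"
  using mscale_real[of "1 / fact k" P] by simp

lemma mscale_mult_left: "mscale c (A ** B) = mscale c A ** (B::complex^'n^'n)"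
  by (simp add: mscale_def matrix_matrix_mult_def vec_eq_iff sum_distrib_left mult.assoc)

lemma mscale_mult_right: "mscale c (A ** B) = A ** mscale c (B::complex^'n^'n)"
  by (simp add: mscale_def matrix_matrix_mult_def vec_eq_iff sum_distrib_left mult.left_commute)

lemma mscale_mscale: "mscale c (mscale d A) = mscale (c*d) (A::complex^'n^'m)"
  by (simp add: mscale_def vec_eq_iff mult.assoc)

lemma mpow_mscale: "mpow (mscale c A) k = mscale (c^k) (mpow (A::complex^'n^'n) k)"
proof (induction k)
  case 0 then show ?case by (simp add: mscale_def vec_eq_iff mat_def)
next
  case (Suc k)
  have "mscale c A ** mscale (c ^ k) (mpow A k) = mscale (c * c^k) (A ** mpow A k)"
    by (simp add: mscale_def matrix_matrix_mult_def vec_eq_iff sum_distrib_left algebra_simps)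
  then show ?case using Suc by simp
qed

lemma mpow_Suc': "mpow A (Suc k) = mpow A k ** (A::'a::comm_ring_1^'n^'n)"
  by (induction k) (simp_all add: matrix_mul_assoc)

lemma mscale_mv: "mscale c A *v x = c *s (A *v (x::complex^'n))"
  by (simp add: mscale_def matrix_vector_mult_def vec_eq_iff sum_distrib_left mult.assoc)

lemma mpow_mv_Suc: "mpow A (Suc k) *v x = A *v (mpow A k *v (x::complex^'n))"
  by (simp add: matrix_vector_mul_assoc)

lemma mpow_mv_Suc': "mpow A (Suc k) *v x = mpow A k *v (A *v (x::complex^'n))"
  by (simp add: matrix_vector_mul_assoc mpow_Suc' del: mpow.simps)

lemma mpow_add: "mpow A (k + l) = mpow A k ** mpow (A::'a::comm_ring_1^'n^'n) l"
  by (induction k) (simp_all add: matrix_mul_assoc)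

lemma norm_vec_le_sum: "norm (x::'a::real_normed_vector^'n) \<le> (\<Sum>i\<in>UNIV. norm (x$i))"
  by (simp add: norm_vec_def L2_set_le_sum)

definition mnorm1 :: "complex^'n^'n \<Rightarrow> real" where
  "mnorm1 M = (\<Sum>i\<in>UNIV. \<Sum>j\<in>UNIV. norm (M$i$j))"

lemma mnorm1_nonneg: "0 \<le> mnorm1 M"
  by (simp add: mnorm1_def sum_nonneg)

lemma row_le_mnorm1: "(\<Sum>l\<in>UNIV. norm (M$i$l)) \<le> mnorm1 M"
  unfolding mnorm1_def
  by (rule member_le_sum[where f="\<lambda>i. \<Sum>l\<in>UNIV. norm (M$i$l)"]) (auto intro: sum_nonneg)

lemma mpow_entry_bound: "norm (mpow M k $ i $ j) \<le> mnorm1 M ^ k"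
proof (induction k arbitrary: i j)
  case 0 then show ?case by (simp add: mat_def)
next
  case (Suc k)
  have "norm (mpow M (Suc k) $ i $ j) = norm (\<Sum>l\<in>UNIV. M$i$l * mpow M k $l$j)"
    by (simp add: matrix_matrix_mult_def)
  also have "\<dots> \<le> (\<Sum>l\<in>UNIV. norm (M$i$l) * mnorm1 M ^ k)"
    by (rule order_trans[OF norm_sum sum_mono]) (simp add: norm_mult Suc mult_left_mono)
  also have "\<dots> = (\<Sum>l\<in>UNIV. norm (M$i$l)) * mnorm1 M ^ k"
    by (simp add: sum_distrib_right)
  also have "\<dots> \<le> mnorm1 M * mnorm1 M ^ k"
    by (rule mult_right_mono[OF row_le_mnorm1]) (simp add: mnorm1_nonneg)
  finally show ?case by simp
qed

lemma mpow_norm_bound: "norm (mpow M k) \<le> real (CARD('n) * CARD('n)) * mnorm1 (M::complex^'n^'n) ^ k"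
proof -
  have "norm (mpow M k) \<le> (\<Sum>i\<in>UNIV. norm (mpow M k $ i))" by (rule norm_vec_le_sum)
  also have "\<dots> \<le> (\<Sum>i\<in>(UNIV::'n set). \<Sum>j\<in>(UNIV::'n set). norm (mpow M k $ i $ j))"
    by (rule sum_mono, rule norm_vec_le_sum)
  also have "\<dots> \<le> (\<Sum>i\<in>(UNIV::'n set). \<Sum>j\<in>(UNIV::'n set). mnorm1 M ^ k)"
    by (intro sum_mono mpow_entry_bound)
  finally show ?thesis by simp
qed

lemma mexp_summable: "summable (\<lambda>k. (1 / fact k) *\<^sub>R mpow (M::complex^'n^'n) k)"
proof (rule summable_comparison_test')
  show "summable (\<lambda>k. real (CARD('n) * CARD('n)) * (inverse (fact k) * mnorm1 M ^ k))"
    by (intro summable_mult summable_exp)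
  fix k :: nat
  show "norm ((1 / fact k) *\<^sub>R mpow M k) \<le> real (CARD('n) * CARD('n)) * (inverse (fact k) * mnorm1 M ^ k)"
    using mpow_norm_bound[of M k]
    by (simp add: divide_simps mult.commute mult.left_commute)
qed

lemma mexp_sums: "(\<lambda>k. (1 / fact k) *\<^sub>R mpow (M::complex^'n^'n) k) sums mexp M"
  unfolding mexp_def mscale_fact using mexp_summable summable_sums by blast

lemma scaleR_cplx: "r *\<^sub>R (z::complex) = complex_of_real r * z"
  by (simp add: scaleR_conv_of_real)

lemma linear_mv: "linear (\<lambda>A::complex^'n^'m. A *v x)"
  by (rule linearI) (simp_all add: matrix_vector_mult_def vec_eq_iff sum.distrib sum_distrib_left
      distrib_right scaleR_cplx mult.assoc)

lemma bl_mv: "bounded_linear (\<lambda>A::complex^'n^'m. A *v x)"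
  using linear_mv linear_conv_bounded_linear by blast

lemma mexp_mv_sums: "(\<lambda>k. (1 / fact k) *\<^sub>R (mpow M k *v x)) sums (mexp M *v (x::complex^'n))"
proof -
  have "(\<lambda>k. (1 / fact k) *\<^sub>R mpow M k *v x) sums (mexp M *v x)"
    by (rule bounded_linear.sums[OF bl_mv mexp_sums])
  moreover have "\<And>k. (1 / fact k) *\<^sub>R mpow M k *v x = (1 / fact k) *\<^sub>R (mpow M k *v x)"
    by (rule linear_cmul[OF linear_mv])
  ultimately show ?thesis by simp
qed

definition imvec :: "complex^'n \<Rightarrow> complex^'n" where
  "imvec v = (\<chi> i. complex_of_real (Im (v$i)))"

lemma linear_imvec: "linear imvec"
  by (rule linearI) (simp_all add: imvec_def vec_eq_iff scaleR_cplx)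

lemma bl_imvec: "bounded_linear imvec"
  using linear_imvec linear_conv_bounded_linear by blast

lemma realphase_imvec: "x \<in> realphase \<longleftrightarrow> imvec x = 0"
  by (simp add: realphase_def imvec_def vec_eq_iff)

definition realM :: "complex^'n^'m \<Rightarrow> bool" where
  "realM M = (\<forall>i j. Im (M$i$j) = 0)"

lemma real_as_ofreal: "Im z = 0 \<Longrightarrow> z = complex_of_real (Re z)"
  by (simp add: complex_eq_iff)

lemma Im_term: "Im w = 0 \<Longrightarrow> complex_of_real (Im z) * w = complex_of_real (Im (z * w))"
  by (simp add: complex_eq_iff)
lemma Re_term: "Im w = 0 \<Longrightarrow> complex_of_real (Re z) * w = complex_of_real (Re (z * w))"
  by (simp add: complex_eq_iff)

lemma ImM_mv: assumes "x \<in> realphase" shows "ImM M *v x = imvec (M *v x)"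
proof -
  have x: "\<And>j. Im (x$j) = 0"
    using assms by (simp add: realphase_def)
  show ?thesis
    unfolding ImM_def imvec_def matrix_vector_mult_def vec_eq_iff
    by (simp add: Im_term[OF x] Im_sum)
qed

lemma ReM_mv: assumes "x \<in> realphase" shows "ReM M *v x = (\<chi> i. complex_of_real (Re ((M *v x)$i)))"
proof -
  have x: "\<And>j. Im (x$j) = 0"
    using assms by (simp add: realphase_def)
  show ?thesis
    unfolding ReM_def matrix_vector_mult_def vec_eq_iff
    by (simp add: Re_term[OF x] Re_sum)
qed

lemma realM_mv: "realM M \<Longrightarrow> x \<in> realphase \<Longrightarrow> M *v x \<in> realphase"
  unfolding realM_def realphase_def
  by (simp add: matrix_vector_mult_def Im_sum)

lemma realM_ReM: "realM (ReM M)" by (simp add: realM_def ReM_def)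
lemma realM_ImM: "realM (ImM M)" by (simp add: realM_def ImM_def)

lemma realM_mult: "realM A \<Longrightarrow> realM B \<Longrightarrow> realM (A ** B)"
  unfolding realM_def by (simp add: matrix_matrix_mult_def Im_sum)

lemma realM_mpow: "realM A \<Longrightarrow> realM (mpow A k)"
  by (induction k) (simp_all add: realM_mult, simp add: realM_def mat_def)

lemma realM_scale: "realM A \<Longrightarrow> realM (mscale (complex_of_real c) A)"
  unfolding realM_def mscale_def by simp

lemma realphase_scaleR: "x \<in> realphase \<Longrightarrow> c *\<^sub>R x \<in> realphase"
  by (simp add: realphase_def)

lemma realphase_diff: "x \<in> realphase \<Longrightarrow> y \<in> realphase \<Longrightarrow> x - y \<in> realphase"
  by (simp add: realphase_def)

lemma mexp_real: assumes "realM M" "x \<in> realphase" shows "mexp M *v x \<in> realphase"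
proof -
  have "(\<lambda>k. imvec ((1 / fact k) *\<^sub>R (mpow M k *v x))) sums imvec (mexp M *v x)"
    by (rule bounded_linear.sums[OF bl_imvec mexp_mv_sums])
  moreover have "\<And>k. imvec ((1 / fact k) *\<^sub>R (mpow M k *v x)) = 0"
    using realphase_scaleR[OF realM_mv[OF realM_mpow[OF assms(1)] assms(2)]]
    by (simp add: realphase_imvec)
  ultimately have "imvec (mexp M *v x) = 0" using sums_unique by fastforce
  then show ?thesis by (simp add: realphase_imvec)
qed

lemma mv_scaleR: "M *v (c *\<^sub>R x) = c *\<^sub>R (M *v (x::complex^'n))"
  by (simp add: matrix_vector_mult_def vec_eq_iff scaleR_cplx sum_distrib_left mult.left_commute)

definition embR :: "real^'n \<Rightarrow> complex^'n" where
  "embR v = (\<chi> i. complex_of_real (v$i))"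

lemma linear_embR: "linear embR"
  by (rule linearI) (simp_all add: embR_def vec_eq_iff scaleR_cplx)

lemma realphase_range: "realphase = range (embR :: real^'n \<Rightarrow> complex^'n)"
proof (rule set_eqI, rule iffI)
  fix x :: "complex^'n" assume "x \<in> realphase"
  then have "x = embR (\<chi> i. Re (x$i))"
    by (simp add: realphase_def embR_def vec_eq_iff complex_eq_iff)
  then show "x \<in> range embR" by blast
qed (auto simp: realphase_def embR_def)

lemma dim_realphase: "dim (realphase :: (complex^'n) set) \<le> CARD('n)"
proof -
  have "dim (embR ` (UNIV :: (real^'n) set)) \<le> dim (UNIV :: (real^'n) set)"
    by (rule dim_image_le[OF linear_embR])
  then show ?thesis by (simp add: realphase_range)
qed

lemma subspace_realphase: "subspace realphase"
  by (auto simp: subspace_def realphase_def)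

definition Kset :: "complex^'n^'n \<Rightarrow> complex^'n^'n \<Rightarrow> nat \<Rightarrow> (complex^'n) set" where
  "Kset A B m = {x. x \<in> realphase \<and> (\<forall>j<m. A *v (mpow B j *v x) = 0)}"

lemma subspace_Kset: "subspace (Kset A B m)"
  unfolding subspace_def Kset_def
  by (auto simp: realphase_def matrix_vector_right_distrib mv_scaleR)

lemma Kset_mono: "m \<le> n \<Longrightarrow> Kset A B n \<subseteq> Kset A B m"
  unfolding Kset_def by auto

lemma Kset_Suc: assumes "realM B"
  shows "Kset A B (Suc m) = {x. x \<in> Kset A B 1 \<and> B *v x \<in> Kset A B m}"
proof -
  have "(\<forall>j<Suc m. P j) \<longleftrightarrow> P 0 \<and> (\<forall>j<m. P (Suc j))" for P :: "nat \<Rightarrow> bool"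
    using less_Suc_eq_0_disj by auto
  then show ?thesis
    unfolding Kset_def using realM_mv[OF assms]
    by (auto simp: mpow_mv_Suc' simp del: mpow.simps)
qed

lemma Kset_stable1: assumes "realM B" "Kset A B m = Kset A B (Suc m)"
  shows "Kset A B (Suc m) = Kset A B (Suc (Suc m))"
  using assms by (simp add: Kset_Suc[OF assms(1), of _ "Suc m"] Kset_Suc[OF assms(1), of _ m])

lemma Kset_stable: assumes "realM B" "Kset A B m = Kset A B (Suc m)" "m \<le> n"
  shows "Kset A B n = Kset A B m"
  using assms(3)
proof (induction n rule: dec_induct)
  case base then show ?case by simp
next
  case (step n)
  have "Kset A B n = Kset A B (Suc n)"
  proof (cases "n = m")
    case True then show ?thesis using assms(2) by simp
  next
    case False
    then obtain p where p: "n = Suc p" "m \<le> p" using step(1) by (cases n) auto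
    have "Kset A B p = Kset A B (Suc p)"
      using Kset_mono[of m p A B] Kset_mono[of p "Suc p" A B] step p
      by (metis Kset_mono antisym le_SucI order_refl)
    then show ?thesis using p Kset_stable1[OF assms(1)] by simp
  qed
  then show ?case using step by simp
qed

lemma Kset_dim_chain: assumes "\<forall>m<N. Kset A B (Suc m) \<noteq> Kset A B m"
  shows "dim (Kset A B N) + N \<le> dim (Kset A B 0)"
  using assms
proof (induction N)
  case 0 then show ?case by simp
next
  case (Suc N)
  have "Kset A B (Suc N) \<subset> Kset A B N"
    using Kset_mono[of N "Suc N" A B] Suc.prems by auto
  then have "span (Kset A B (Suc N)) \<subset> span (Kset A B N)"
  proof -
    have "span (Kset A B n) = Kset A B n" for n
      by (rule span_eq_iff[THEN iffD2, OF subspace_Kset])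
    then show ?thesis using \<open>Kset A B (Suc N) \<subset> Kset A B N\<close> by (simp only:)
  qed
  then have "dim (Kset A B (Suc N)) < dim (Kset A B N)" by (rule dim_psubset)
  then show ?case using Suc by simp
qed

lemma Kset_stab: assumes "realM B" "x \<in> Kset A B CARD('n)"
  shows "A *v (mpow B j *v (x::complex^'n)) = 0"
proof -
  have "\<exists>m\<le>CARD('n). Kset A B (Suc m) = Kset A B m"
  proof (rule ccontr)
    assume "\<not> ?thesis"
    then have "\<forall>m<Suc CARD('n). Kset A B (Suc m) \<noteq> Kset A B m" by auto
    from Kset_dim_chain[OF this] have "Suc CARD('n) \<le> dim (Kset A B 0)" by simp
    moreover have "Kset A B 0 = realphase" by (simp add: Kset_def)
    ultimately show False using dim_realphase[where 'n='n] by simp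
  qed
  then obtain m where m: "m \<le> CARD('n)" "Kset A B m = Kset A B (Suc m)" by auto
  have "Kset A B (max (Suc j) CARD('n)) = Kset A B CARD('n)"
    using Kset_stable[OF assms(1) m(2)] m(1) by (metis max.cobounded2 le_trans max.cobounded1)
  then have "x \<in> Kset A B (max (Suc j) CARD('n))" using assms(2) by simp
  then show ?thesis by (auto simp: Kset_def)
qed

lemma powser_identity:
  fixes c :: "nat \<Rightarrow> complex"
  assumes t: "t > 0" and S: "\<And>s. s \<in> {0<..t} \<Longrightarrow> (\<lambda>k. c k * (complex_of_real s)^k) sums 0"
  shows "c k = 0"
proof (induction k rule: less_induct)
  case (less k)
  define g where "g z = (\<Sum>n. c (n+k) * z^n)" for z :: complex
  have sh: "summable (\<lambda>n. c (n+k) * z^n) \<and> g z = 0" if z: "z = complex_of_real s" "s \<in> {0<..t}" for z s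
  proof -
    have znz: "z \<noteq> 0" using z by auto
    have sm: "summable (\<lambda>n. c n * z^n)" using S[OF z(2)] z(1) by (simp add: sums_summable)
    have sm2: "summable (\<lambda>n. c (n+k) * z^(n+k))"
      using summable_ignore_initial_segment[OF sm, of k] by simp
    have eq: "(\<lambda>n. c (n+k) * z^n) = (\<lambda>n. inverse (z^k) * (c (n+k) * z^(n+k)))"
      using znz by (auto simp: power_add field_simps)
    have sm3: "summable (\<lambda>n. c (n+k) * z^n)"
      unfolding eq by (rule summable_mult[OF sm2])
    have "(\<Sum>n. c n * z^n) = (\<Sum>n. c (n+k) * z^(n+k)) + (\<Sum>i<k. c i * z^i)"
      by (rule suminf_split_initial_segment[OF sm])
    also have "(\<Sum>i<k. c i * z^i) = 0" using less by simp
    also have "(\<Sum>n. c (n+k) * z^(n+k)) = z^k * g z"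
      unfolding g_def using suminf_mult[OF sm3, of "z^k"]
      by (simp add: power_add mult_ac)
    finally have "z^k * g z = (\<Sum>n. c n * z^n)" by simp
    also have "\<dots> = 0" using S[OF z(2)] z(1) sums_unique by fastforce
    finally show ?thesis using znz sm3 by simp
  qed
  have cont: "isCont g 0"
    unfolding g_def
    by (rule isCont_powser[where K="complex_of_real t"]) (use sh[of "complex_of_real t" t] t in auto)
  define sq where "sq n = complex_of_real (t * inverse (real (Suc n)))" for n
  have "(\<lambda>n. t * inverse (real (Suc n))) \<longlonglongrightarrow> t * 0"
    by (intro tendsto_mult tendsto_const LIMSEQ_inverse_real_of_nat)
  then have "sq \<longlonglongrightarrow> complex_of_real (t * 0)" unfolding sq_def by (rule tendsto_of_real)
  then have "sq \<longlonglongrightarrow> 0" by simp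
  then have "(\<lambda>n. g (sq n)) \<longlonglongrightarrow> g 0" by (rule isCont_tendsto_compose[OF cont])
  moreover have "g (sq n) = 0" for n
  proof -
    have "t * inverse (real (Suc n)) \<in> {0<..t}" using t
      by (auto simp: field_simps)
    then show ?thesis using sh sq_def by blast
  qed
  ultimately have "g 0 = 0" using LIMSEQ_unique[OF _ tendsto_const] by fastforce
  moreover have "g 0 = c k" unfolding g_def using powser_zero[of "\<lambda>n. c (n+k)"] by simp
  ultimately show ?case by simp
qed

lemma i_term: "\<i> * z * v = \<i> * (complex_of_real (Re z) * v) - complex_of_real (Im z) * v"
proof -
  have "z = complex_of_real (Re z) + \<i> * complex_of_real (Im z)" by (simp add: complex_eq_iff)
  then have "\<i> * z * v = \<i> * (complex_of_real (Re z) + \<i> * complex_of_real (Im z)) * v" by simp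
  also have "\<dots> = \<i> * (complex_of_real (Re z) * v) - complex_of_real (Im z) * v"
    by (simp add: algebra_simps)
  finally show ?thesis .
qed

lemma G_decomp: "mscale \<i> F *v v = \<i> *s (ReM F *v v) - ImM F *v (v::complex^'n)"
  by (simp add: mscale_def ReM_def ImM_def matrix_vector_mult_def vec_eq_iff i_term
      sum_distrib_left sum_subtractf)

lemma mv_smult: "M *v (c *s v) = c *s (M *v (v::complex^'n))"
  by (simp add: matrix_vector_mult_def vec_eq_iff sum_distrib_left mult.left_commute)

lemma imvec_i: "w \<in> realphase \<Longrightarrow> u \<in> realphase \<Longrightarrow> imvec (\<i> *s w - u) = w"
  by (simp add: imvec_def realphase_def vec_eq_iff complex_eq_iff)

lemma imvec_ofreal: "imvec (complex_of_real r *s v) = r *\<^sub>R imvec v"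
  by (simp add: imvec_def vec_eq_iff scaleR_cplx)

lemma mpow_neg_mv: "mpow (mscale (-1) B) k *v x = (-1)^k *s (mpow B k *v (x::complex^'n))"
  by (simp add: mpow_mscale mscale_mv)

lemma L1: assumes "\<forall>j<k. ReM F *v (mpow (ImM F) j *v x) = 0"
  shows "mpow (mscale \<i> F) k *v x = mpow (mscale (-1) (ImM F)) k *v (x::complex^'n)"
  using assms
proof (induction k)
  case 0 then show ?case by simp
next
  case (Suc k)
  have IH: "mpow (mscale \<i> F) k *v x = mpow (mscale (-1) (ImM F)) k *v x" using Suc by simp
  have A0: "ReM F *v (mpow (mscale (-1) (ImM F)) k *v x) = 0"
    using Suc.prems by (simp add: mpow_neg_mv mv_smult)
  have "mpow (mscale \<i> F) (Suc k) *v x = mscale \<i> F *v (mpow (mscale (-1) (ImM F)) k *v x)"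
    by (simp only: mpow_mv_Suc IH)
  also have "\<dots> = - (ImM F *v (mpow (mscale (-1) (ImM F)) k *v x))"
    by (simp add: G_decomp A0)
  also have "\<dots> = mpow (mscale (-1) (ImM F)) (Suc k) *v x"
    by (simp only: mpow_mv_Suc mscale_mv) (simp add: vec_eq_iff)
  finally show ?case .
qed

lemma L2: assumes "x \<in> realphase" "\<forall>j<k. ReM F *v (mpow (ImM F) j *v x) = 0"
  shows "ImM (mpow (mscale \<i> F) (Suc k)) *v x = (-1)^k *s (ReM F *v (mpow (ImM F) k *v (x::complex^'n)))"
proof -
  define y where "y = mpow (mscale (-1) (ImM F)) k *v x"
  have yr: "y \<in> realphase" unfolding y_def
    by (intro realM_mv realM_mpow realM_scale[of _ "-1", simplified] realM_ImM assms(1))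
  have "ImM (mpow (mscale \<i> F) (Suc k)) *v x = imvec (mpow (mscale \<i> F) (Suc k) *v x)"
    by (rule ImM_mv[OF assms(1)])
  also have "mpow (mscale \<i> F) (Suc k) *v x = \<i> *s (ReM F *v y) - ImM F *v y"
    by (simp only: mpow_mv_Suc L1[OF assms(2)] G_decomp y_def)
  also have "imvec \<dots> = ReM F *v y"
    by (rule imvec_i) (intro realM_mv realM_ReM realM_ImM yr)+
  also have "\<dots> = (-1)^k *s (ReM F *v (mpow (ImM F) k *v x))"
    by (simp add: y_def mpow_neg_mv mv_smult)
  finally show ?thesis .
qed

lemma char2: assumes "x \<in> realphase"
  shows "x \<in> Kset (ReM F) (ImM F) CARD('n) \<longleftrightarrow>
    (\<forall>k\<ge>1. ImM (mpow (mscale \<i> F) k) *v x = (0::complex^'n))"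
proof
  assume xK: "x \<in> Kset (ReM F) (ImM F) CARD('n)"
  have all: "\<forall>j. ReM F *v (mpow (ImM F) j *v x) = 0"
    using Kset_stab[OF realM_ImM xK] by blast
  show "\<forall>k\<ge>1. ImM (mpow (mscale \<i> F) k) *v x = 0"
  proof (intro allI impI)
    fix k :: nat assume "k \<ge> 1"
    then obtain k' where k: "k = Suc k'" by (cases k) auto
    show "ImM (mpow (mscale \<i> F) k) *v x = 0"
      unfolding k using L2[OF assms, of k' F] all by simp
  qed
next
  assume H: "\<forall>k\<ge>1. ImM (mpow (mscale \<i> F) k) *v x = 0"
  have "\<forall>j<n. ReM F *v (mpow (ImM F) j *v x) = 0" for n
  proof (induction n)
    case 0 then show ?case by simp
  next
    case (Suc n)
    have "ImM (mpow (mscale \<i> F) (Suc n)) *v x = 0" using H[rule_format, of "Suc n"] by simp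
    then have "(-1)^n *s (ReM F *v (mpow (ImM F) n *v x)) = 0"
      using L2[OF assms Suc.IH] by simp
    then have "ReM F *v (mpow (ImM F) n *v x) = 0"
      by (simp add: vec_eq_iff)
    then show ?case using Suc.IH less_Suc_eq by auto
  qed
  then show "x \<in> Kset (ReM F) (ImM F) CARD('n)" using assms by (simp add: Kset_def)
qed

lemma K_all: "x \<in> Kset (ReM F) (ImM F) CARD('n) \<Longrightarrow> ReM F *v (mpow (ImM F) j *v (x::complex^'n)) = 0"
  using Kset_stab[OF realM_ImM] by blast

lemma mexp_eq_on: "(\<And>k. mpow M k *v x = mpow N k *v x) \<Longrightarrow> mexp M *v x = mexp N *v (x::complex^'n)"
  using mexp_mv_sums[of M x] mexp_mv_sums[of N x] sums_unique2 by fastforce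

lemma thm3: assumes "x \<in> Kset (ReM F) (ImM F) CARD('n)"
  shows "mexp (mscale (2 * \<i> * complex_of_real t) F) *v x
       = mexp (mscale (complex_of_real (-2 * t)) (ImM F)) *v (x::complex^'n)"
proof (rule mexp_eq_on)
  fix k
  have e: "mscale (2 * \<i> * complex_of_real t) F = mscale (complex_of_real (2*t)) (mscale \<i> F)"
    by (simp add: mscale_mscale mult_ac)
  have "mpow (mscale \<i> F) k *v x = mpow (mscale (-1) (ImM F)) k *v x"
    using L1 K_all[OF assms] by blast
  then show "mpow (mscale (2 * \<i> * complex_of_real t) F) k *v x =
        mpow (mscale (complex_of_real (- 2 * t)) (ImM F)) k *v x"
  proof -
    have "mpow (mscale (complex_of_real (2*t)) (mscale \<i> F)) k *v x
        = (complex_of_real (2*t))^k *s ((-1)^k *s (mpow (ImM F) k *v x))"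
      by (simp only: mpow_mscale[of "complex_of_real (2*t)" "mscale \<i> F"] mscale_mv
            \<open>mpow (mscale \<i> F) k *v x = _\<close> mpow_neg_mv)
    also have "\<dots> = (complex_of_real (-2*t))^k *s (mpow (ImM F) k *v x)"
    proof -
      have "complex_of_real (-2*t) = complex_of_real (2*t) * (-1)" by simp
      then have "complex_of_real (-2*t)^k = complex_of_real (2*t)^k * (-1)^k"
        by (simp only: power_mult_distrib)
      then show ?thesis by (simp only: vector_smult_assoc)
    qed
    also have "\<dots> = mpow (mscale (complex_of_real (- 2 * t)) (ImM F)) k *v x"
      by (simp only: mpow_mscale mscale_mv)
    finally show ?thesis unfolding e .
  qed
qed

lemma exp_series_Im: assumes "x \<in> realphase"
  shows "(\<lambda>k. ((1 / fact k) * (2 * s)^k) *\<^sub>R (ImM (mpow (mscale \<i> F) k) *v x))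
          sums (ImM (mexp (mscale (2 * \<i> * complex_of_real s) F)) *v (x::complex^'n))"
proof -
  let ?M = "mscale (2 * \<i> * complex_of_real s) F"
  have e: "?M = mscale (complex_of_real (2 * s)) (mscale \<i> F)"
    by (simp add: mscale_mscale mult_ac)
  have "(\<lambda>k. imvec ((1 / fact k) *\<^sub>R (mpow ?M k *v x))) sums imvec (mexp ?M *v x)"
    by (rule bounded_linear.sums[OF bl_imvec mexp_mv_sums])
  moreover have "imvec ((1 / fact k) *\<^sub>R (mpow ?M k *v x))
      = ((1 / fact k) * (2 * s)^k) *\<^sub>R (ImM (mpow (mscale \<i> F) k) *v x)" for k
  proof -
    have "mpow ?M k *v x = complex_of_real ((2 * s)^k) *s (mpow (mscale \<i> F) k *v x)"
      unfolding e by (simp only: mpow_mscale[of "complex_of_real (2 * s)" "mscale \<i> F"] mscale_mv of_real_power)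
    then have "imvec ((1 / fact k) *\<^sub>R (mpow ?M k *v x))
       = (1 / fact k) *\<^sub>R (((2 * s)^k) *\<^sub>R imvec (mpow (mscale \<i> F) k *v x))"
      by (simp only: linear_cmul[OF linear_imvec] imvec_ofreal)
    then show ?thesis
      by (simp add: ImM_mv[OF assms])
  qed
  ultimately show ?thesis by (simp add: ImM_mv[OF assms])
qed

lemma w0: "x \<in> realphase \<Longrightarrow> ImM (mpow M 0) *v x = 0"
  by (simp add: ImM_mv realphase_imvec)

lemma thm1: assumes t: "t > 0"
  shows "Kset (ReM F) (ImM F) CARD('n) =
    (\<Inter>s\<in>{0..t}. KerM (ImM (mexp (mscale (2 * \<i> * complex_of_real s) F)))) \<inter> (realphase :: (complex^'n) set)"
proof (rule set_eqI, rule iffI)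
  fix x assume xK: "x \<in> Kset (ReM F) (ImM F) CARD('n)"
  then have xr: "x \<in> realphase" by (simp add: Kset_def)
  have w: "ImM (mpow (mscale \<i> F) k) *v x = 0" for k
  proof (cases k)
    case 0 then show ?thesis using w0[OF xr] by simp
  next
    case (Suc k')
    have "\<forall>k\<ge>1. ImM (mpow (mscale \<i> F) k) *v x = 0" using char2[OF xr, of F] xK by blast
    from this[rule_format, of k] Suc show ?thesis by simp
  qed
  show "x \<in> (\<Inter>s\<in>{0..t}. KerM (ImM (mexp (mscale (2 * \<i> * complex_of_real s) F)))) \<inter> realphase"
  proof (intro IntI INT_I)
    fix s :: real
    have "(\<lambda>k. 0) sums (ImM (mexp (mscale (2 * \<i> * complex_of_real s) F)) *v x)"
      using exp_series_Im[OF xr, of s F] by (simp add: w)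
    then show "x \<in> KerM (ImM (mexp (mscale (2 * \<i> * complex_of_real s) F)))"
      using sums_unique2[OF _ sums_zero] by (simp add: KerM_def)
  qed (rule xr)
next
  fix x assume xs: "x \<in> (\<Inter>s\<in>{0..t}. KerM (ImM (mexp (mscale (2 * \<i> * complex_of_real s) F)))) \<inter> realphase"
  then have xr: "x \<in> realphase" by simp
  have wz: "(ImM (mpow (mscale \<i> F) k) *v x) $ i = 0" for k i
  proof -
    define c where "c k = complex_of_real (2^k / fact k) * ((ImM (mpow (mscale \<i> F) k) *v x) $ i)" for k
    have "c k = 0"
    proof (rule powser_identity[OF t])
      fix s assume s: "s \<in> {0<..t}"
      have "(\<lambda>k. (((1 / fact k) * (2 * s)^k) *\<^sub>R (ImM (mpow (mscale \<i> F) k) *v x)) $ i)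
          sums ((ImM (mexp (mscale (2 * \<i> * complex_of_real s) F)) *v x) $ i)"
        by (rule bounded_linear.sums[OF bounded_linear_vec_nth exp_series_Im[OF xr]])
      moreover have "ImM (mexp (mscale (2 * \<i> * complex_of_real s) F)) *v x = 0"
        using xs s by (auto simp: KerM_def)
      moreover have "(((1 / fact k) * (2 * s)^k) *\<^sub>R (ImM (mpow (mscale \<i> F) k) *v x)) $ i
          = c k * complex_of_real s ^ k" for k
        by (simp add: c_def scaleR_cplx power_mult_distrib field_simps)
      ultimately show "(\<lambda>k. c k * complex_of_real s ^ k) sums 0" by simp
    qed
    then show ?thesis by (simp add: c_def)
  qed
  have "\<forall>k\<ge>1. ImM (mpow (mscale \<i> F) k) *v x = 0"
    using wz by (simp add: vec_eq_iff)
  then show "x \<in> Kset (ReM F) (ImM F) CARD('n)" using char2[OF xr] by blast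
qed

lemma mexp_entry_sums:
  "(\<lambda>k. (a^k / fact k) * (mpow P k $ i $ j)) sums (mexp (mscale a (P::complex^'n^'n)) $ i $ j)"
proof -
  have bl: "bounded_linear (\<lambda>A::complex^'n^'n. A $ i $ j)"
    using bounded_linear_compose[OF bounded_linear_vec_nth[of j] bounded_linear_vec_nth[of i]] by simp
  have "(\<lambda>k. ((1 / fact k) *\<^sub>R mpow (mscale a P) k) $ i $ j) sums (mexp (mscale a P) $ i $ j)"
    by (rule bounded_linear.sums[OF bl mexp_sums])
  moreover have "((1 / fact k) *\<^sub>R mpow (mscale a P) k) $ i $ j = (a^k / fact k) * (mpow P k $ i $ j)" for k
    by (simp only: mpow_mscale) (simp add: mscale_def scaleR_cplx)
  ultimately show ?thesis by simp
qed


lemma mexp_entry_abs: "summable (\<lambda>k. norm ((a^k / fact k) * (mpow (P::complex^'n^'n) k $ i $ j)))"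
proof (rule summable_comparison_test')
  show "summable (\<lambda>k. inverse (fact k) * (norm a * mnorm1 P)^k)" by (rule summable_exp)
  fix k
  have "norm ((a^k / fact k) * (mpow P k $ i $ j)) = norm a ^ k / fact k * norm (mpow P k $ i $ j)"
    by (simp add: norm_mult norm_divide norm_power)
  also have "\<dots> \<le> norm a ^ k / fact k * mnorm1 P ^ k"
    by (rule mult_left_mono[OF mpow_entry_bound]) simp
  also have "\<dots> = inverse (fact k) * (norm a * mnorm1 P)^k"
    by (simp add: power_mult_distrib field_simps)
  finally show "norm (norm ((a^k / fact k) * (mpow P k $ i $ j))) \<le> inverse (fact k) * (norm a * mnorm1 P)^k"
    by simp
qed


lemma binom_fact_sum: "(a + b :: complex)^k / fact k = (\<Sum>p\<le>k. (a^p / fact p) * (b^(k-p) / fact (k-p)))"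
proof -
  have "(a + b)^k / fact k = (\<Sum>p\<le>k. of_nat (k choose p) * a^p * b^(k-p)) / fact k"
    by (simp add: binomial_ring)
  also have "\<dots> = (\<Sum>p\<le>k. of_nat (k choose p) * a^p * b^(k-p) / fact k)"
    by (simp add: sum_divide_distrib)
  also have "\<dots> = (\<Sum>p\<le>k. (a^p / fact p) * (b^(k-p) / fact (k-p)))"
  proof (rule sum.cong[OF refl])
    fix p assume "p \<in> {..k}"
    then have pk: "p \<le> k" by simp
    show "of_nat (k choose p) * a^p * b^(k-p) / fact k = (a^p / fact p) * (b^(k-p) / fact (k-p))"
      using binomial_fact[OF pk, where 'a=complex] by (simp add: field_simps)
  qed
  finally show ?thesis .
qed


lemma mexp_add: "mexp (mscale a P) ** mexp (mscale b P) = mexp (mscale (a + b) (P::complex^'n^'n))"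
proof -
  have "(mexp (mscale a P) ** mexp (mscale b P)) $ i $ j = mexp (mscale (a + b) P) $ i $ j" for i j
  proof -
    define \<alpha> where "\<alpha> l k = (a^k / fact k) * (mpow P k $ i $ l)" for l k
    define \<beta> where "\<beta> l k = (b^k / fact k) * (mpow P k $ l $ j)" for l k
    have C: "(\<lambda>k. \<Sum>p\<le>k. \<alpha> l p * \<beta> l (k - p)) sums (mexp (mscale a P) $ i $ l * mexp (mscale b P) $ l $ j)" for l
    proof -
      have "(\<lambda>k. \<Sum>p\<le>k. \<alpha> l p * \<beta> l (k - p)) sums ((\<Sum>k. \<alpha> l k) * (\<Sum>k. \<beta> l k))"
        unfolding \<alpha>_def \<beta>_def by (intro Cauchy_product_sums mexp_entry_abs)
      moreover have "(\<Sum>k. \<alpha> l k) = mexp (mscale a P) $ i $ l"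
        unfolding \<alpha>_def by (rule sums_unique[OF mexp_entry_sums, symmetric])
      moreover have "(\<Sum>k. \<beta> l k) = mexp (mscale b P) $ l $ j"
        unfolding \<beta>_def by (rule sums_unique[OF mexp_entry_sums, symmetric])
      ultimately show ?thesis by simp
    qed
    have "(\<lambda>k. \<Sum>l\<in>UNIV. \<Sum>p\<le>k. \<alpha> l p * \<beta> l (k - p))
        sums (\<Sum>l\<in>UNIV. mexp (mscale a P) $ i $ l * mexp (mscale b P) $ l $ j)"
      by (rule sums_sum[OF C])
    moreover have "(\<Sum>l\<in>UNIV. \<Sum>p\<le>k. \<alpha> l p * \<beta> l (k - p)) = ((a + b)^k / fact k) * (mpow P k $ i $ j)" for k
    proof -
      have "(\<Sum>l\<in>UNIV. \<Sum>p\<le>k. \<alpha> l p * \<beta> l (k - p))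
          = (\<Sum>p\<le>k. (a^p / fact p) * (b^(k-p) / fact (k-p)) * (\<Sum>l\<in>UNIV. mpow P p $ i $ l * mpow P (k-p) $ l $ j))"
        unfolding \<alpha>_def \<beta>_def
      proof (subst sum.swap, rule sum.cong[OF refl])
        fix p
        show "(\<Sum>l\<in>UNIV. a ^ p / fact p * mpow P p $ i $ l * (b ^ (k - p) / fact (k - p) * mpow P (k - p) $ l $ j))
          = (a^p / fact p) * (b^(k-p) / fact (k-p)) * (\<Sum>l\<in>UNIV. mpow P p $ i $ l * mpow P (k-p) $ l $ j)"
          unfolding sum_distrib_left by (rule sum.cong[OF refl]) (simp only: mult_ac)
      qed
      also have "\<dots> = (\<Sum>p\<le>k. (a^p / fact p) * (b^(k-p) / fact (k-p)) * (mpow P k $ i $ j))"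
      proof (rule sum.cong[OF refl])
        fix p assume "p \<in> {..k}"
        then have "mpow P p ** mpow P (k - p) = mpow P k" by (simp add: mpow_add[symmetric])
        moreover have "(mpow P p ** mpow P (k - p)) $ i $ j = (\<Sum>l\<in>UNIV. mpow P p $ i $ l * mpow P (k-p) $ l $ j)"
          by (simp add: matrix_matrix_mult_def)
        ultimately have "(\<Sum>l\<in>UNIV. mpow P p $ i $ l * mpow P (k-p) $ l $ j) = mpow P k $ i $ j"
          by simp
        then show "(a^p / fact p) * (b^(k-p) / fact (k-p)) * (\<Sum>l\<in>UNIV. mpow P p $ i $ l * mpow P (k-p) $ l $ j)
            = (a^p / fact p) * (b^(k-p) / fact (k-p)) * (mpow P k $ i $ j)" by simp
      qed
      also have "\<dots> = ((a + b)^k / fact k) * (mpow P k $ i $ j)"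
        by (simp only: binom_fact_sum sum_distrib_right)
      finally show ?thesis .
    qed
    ultimately have "(\<lambda>k. ((a + b)^k / fact k) * (mpow P k $ i $ j))
        sums ((mexp (mscale a P) ** mexp (mscale b P)) $ i $ j)"
      by (simp add: matrix_matrix_mult_def)
    then show ?thesis using sums_unique2[OF _ mexp_entry_sums[of "a+b" P i j]] by blast
  qed
  then show ?thesis by (simp add: vec_eq_iff)
qed


lemma mexp_zero: "mexp (mscale 0 P) = mat 1"
proof -
  have "(\<lambda>k. (1 / fact k) *\<^sub>R mpow (mscale 0 P) k) sums mexp (mscale 0 P)" by (rule mexp_sums)
  moreover have "(\<lambda>k. (1 / fact k) *\<^sub>R mpow (mscale 0 P) k) = (\<lambda>k. if k = 0 then mat 1 else 0)"
    by (rule ext) (simp only: mpow_mscale, auto simp: mscale_def vec_eq_iff zero_power)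
  ultimately have "(\<lambda>k. if k = 0 then mat 1 else 0) sums mexp (mscale 0 P)" by simp
  moreover have "(\<lambda>k. if k = 0 then (mat 1 :: complex^'n^'n) else 0) sums mat 1"
    using sums_single[of 0 "\<lambda>_. mat 1 :: complex^'n^'n"] by simp
  ultimately show ?thesis using sums_unique2 by blast
qed


lemma linear_mvec: "linear (\<lambda>v. M *v (v::complex^'n))"
  by (rule linearI) (simp_all add: matrix_vector_right_distrib mv_scaleR)

lemma invariance: fixes F :: "complex^('n::finite)^'n" assumes xK: "x \<in> Kset (ReM F) (ImM F) CARD('n)"
  shows "mexp (mscale (complex_of_real c) (ImM F)) *v x \<in> Kset (ReM F) (ImM F) CARD('n)"
proof -
  let ?N = "mscale (complex_of_real c) (ImM F)"
  have xr: "x \<in> realphase" using xK by (simp add: Kset_def)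
  have r: "mexp ?N *v x \<in> realphase"
    by (rule mexp_real[OF realM_scale[OF realM_ImM] xr])
  have z: "ReM F *v (mpow (ImM F) j *v (mexp ?N *v x)) = 0" for j
  proof -
    let ?L = "\<lambda>v. (ReM F ** mpow (ImM F) j) *v (v::complex^'n)"
    have bl: "bounded_linear ?L" using linear_mvec linear_conv_bounded_linear by blast
    have "(\<lambda>k. ?L ((1 / fact k) *\<^sub>R (mpow ?N k *v x))) sums ?L (mexp ?N *v x)"
      by (rule bounded_linear.sums[OF bl mexp_mv_sums])
    moreover have "?L ((1 / fact k) *\<^sub>R (mpow ?N k *v x)) = 0" for k
    proof -
      have "?L ((1 / fact k) *\<^sub>R (mpow ?N k *v x))
          = (1 / fact k) *\<^sub>R ((complex_of_real c)^k *s (ReM F *v (mpow (ImM F) (j + k) *v x)))"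
        by (simp add: mv_scaleR mpow_mscale mscale_mv mv_smult matrix_vector_mul_assoc mpow_add matrix_mul_assoc
            del: mpow.simps)
      then show ?thesis using K_all[OF xK] by simp
    qed
    ultimately have "?L (mexp ?N *v x) = 0" using sums_unique2[OF _ sums_zero] by simp
    then show ?thesis by (simp add: matrix_vector_mul_assoc matrix_mul_assoc)
  qed
  show ?thesis using r z by (simp add: Kset_def)
qed

lemma thm4: fixes F :: "complex^('n::finite)^'n" shows "(\<lambda>X. mexp (mscale (complex_of_real (2 * t)) (ImM F)) *v X) ` Kset (ReM F) (ImM F) CARD('n)
    = Kset (ReM F) (ImM F) CARD('n)"
proof (rule set_eqI, rule iffI)
  fix y assume "y \<in> (\<lambda>X. mexp (mscale (complex_of_real (2 * t)) (ImM F)) *v X) ` Kset (ReM F) (ImM F) CARD('n)"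
  then show "y \<in> Kset (ReM F) (ImM F) CARD('n)" using invariance by blast
next
  fix y :: "complex^'n" assume yK: "y \<in> Kset (ReM F) (ImM F) CARD('n)"
  define x where "x = mexp (mscale (complex_of_real (-2 * t)) (ImM F)) *v y"
  have xK: "x \<in> Kset (ReM F) (ImM F) CARD('n)" unfolding x_def by (rule invariance[OF yK])
  have "mexp (mscale (complex_of_real (2 * t)) (ImM F)) *v x
      = (mexp (mscale (complex_of_real (2 * t)) (ImM F)) ** mexp (mscale (complex_of_real (-2 * t)) (ImM F))) *v y"
    by (simp add: x_def matrix_vector_mul_assoc)
  also have "\<dots> = mexp (mscale 0 (ImM F)) *v y"
    by (simp only: mexp_add) simp
  also have "\<dots> = y" by (simp add: mexp_zero)
  finally show "y \<in> (\<lambda>X. mexp (mscale (complex_of_real (2 * t)) (ImM F)) *v X) ` Kset (ReM F) (ImM F) CARD('n)"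
    using xK by (metis image_eqI)
qed

lemma sing_Kset: "singular_space (F::'d::finite cmat) = Kset (ReM F) (ImM F) CARD('d + 'd)"
proof -
  have c: "CARD('d + 'd) = 2 * CARD('d)" by (simp add: card_UNIV_sum)
  show ?thesis
    unfolding singular_space_def Kset_def KerM_def c
    by (auto simp: matrix_vector_mul_assoc)
qed

lemma thm2: "Kset (ReM F) (ImM F) CARD('n) =
   (\<Inter>k\<in>{1..}. KerM (ImM (mpow (mscale \<i> F) k))) \<inter> (realphase :: (complex^'n) set)"
  using char2 by (auto simp: KerM_def Kset_def)

theorem mainTheorem9:
  fixes Q :: "'d::finite cmat" and F :: "'d cmat"
  assumes "transpose Q = Q"
    and "F = Jmat ** Q"
  shows "(\<forall>t::real. t > 0 \<longrightarrow>
            singular_space F =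
              (\<Inter>s\<in>{0..t}. KerM (ImM (mexp (mscale (2 * \<i> * complex_of_real s) F)))) \<inter> realphase
          \<and> singular_space F =
              (\<Inter>k\<in>{1..}. KerM (ImM (mpow (mscale \<i> F) k))) \<inter> realphase)
       \<and> (\<forall>X\<in>singular_space F. \<forall>t::real.
            mexp (mscale (2 * \<i> * complex_of_real t) F) *v X
              = mexp (mscale (complex_of_real (-2 * t)) (ImM F)) *v X)
       \<and> (\<forall>t::real. (\<lambda>X. mexp (mscale (complex_of_real (2 * t)) (ImM F)) *v X) ` singular_space F
              = singular_space F)"
proof -
  have S: "singular_space F = Kset (ReM F) (ImM F) CARD('d + 'd)" by (rule sing_Kset)
  show ?thesis
    unfolding S
  proof (intro conjI allI impI ballI)
    fix t :: real assume "t > 0"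
    then show "Kset (ReM F) (ImM F) CARD('d + 'd) =
      (\<Inter>s\<in>{0..t}. KerM (ImM (mexp (mscale (2 * \<i> * complex_of_real s) F)))) \<inter> realphase"
      by (rule thm1)
  next
    show "Kset (ReM F) (ImM F) CARD('d + 'd) =
      (\<Inter>k\<in>{1..}. KerM (ImM (mpow (mscale \<i> F) k))) \<inter> realphase"
      by (rule thm2)
  next
    fix X t assume "X \<in> Kset (ReM F) (ImM F) CARD('d + 'd)"
    then show "mexp (mscale (2 * \<i> * complex_of_real t) F) *v X
              = mexp (mscale (complex_of_real (-2 * t)) (ImM F)) *v X"
      by (rule thm3)
  next
    fix t :: real
    show "(\<lambda>X. mexp (mscale (complex_of_real (2 * t)) (ImM F)) *v X) ` Kset (ReM F) (ImM F) CARD('d + 'd)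
      = Kset (ReM F) (ImM F) CARD('d + 'd)"
      by (rule thm4)
  qed
qed

end
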